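(* In the setting described in the context, assume A1$'$, A2 and A3. Suppose there exist a fixed subset $\mathcal K^*\subseteq\{1,\dots,K\}$ and a constant $\delta>0$ such that $\inf_{\mathbf w\in\mathcal W^*}\sum_{k\in\mathcal K^*}w_k\ge\frac12+\delta$ and $$\limsup_{n\to\infty}\Pr\Big(\bigcup_{k\in\mathcal K^*}\{Y\notin\mathcal C_k(\mathbf X;\mathcal D_n)\}\Big)\le\alpha.$$ Then $\liminf_{n\to\infty}\Pr\big(Y\in\mathcal C_{\mathrm{comb}}(\mathbf X;\mathcal D_n)\big)\ge1-\alpha$.
   Context: Setting: fix $K\ge2$ and $\alpha\in(0,1)$. For each sample size $n$, on a common probability space there are a random data set $\mathcal D_n$ and a random test pair $(\mathbf X,Y)$ with $\mathbf X\in\mathcal X\subseteq\mathbb R^p$, $Y\in\mathbb R$. For each $k\in\{1,\dots,K\}$ there is a random prediction set $\mathcal C_k(\mathbf X;\mathcal D_n)\subseteq\mathbb R$, determined by $\mathcal D_n$ and $\mathbf X$, such that the events $\{Y\in\mathcal C_k(\mathbf X;\mathcal D_n)\}$ are measurable. Let $\Delta^{K-1}=\{\mathbf w\in[0,1]^K:w_k\ge0,\sum_k w_k=1\}$ and let $\widehat{\mathbf w}_n=(\widehat w_{n,1},\dots,\widehat w_{n,K})$ be a $\sigma(\mathcal D_n)$-measurable random vector in $\Delta^{K-1}$. Let $\mathcal W^*\subseteq\Delta^{K-1}$ be a nonempty closed convex set; $\|\cdot\|$ is the Euclidean norm. A1$'$: $\sup_{k\in\{1,\dots,K\}}\big|\Pr(Y\notin\mathcal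 C_k(\mathbf X;\mathcal D_n)\mid\mathcal D_n)-\alpha\big|\to0$ in probability as $n\to\infty$. A2: $\inf_{\mathbf w\in\mathcal W^*}\|\widehat{\mathbf w}_n-\mathbf w\|\to0$ in probability as $n\to\infty$. A3: $\mathcal C_{\mathrm{comb}}(\mathbf X;\mathcal D_n):=\{y\in\mathbb R:\sum_{k=1}^K\widehat w_{n,k}\mathbf 1\{y\in\mathcal C_k(\mathbf X;\mathcal D_n)\}>1/2\}$. *)

theory Defs
  imports "HOL-Probability.Probability"
begin

definition tendsto_in_prob :: "'a measure \<Rightarrow> (nat \<Rightarrow> 'a \<Rightarrow> real) \<Rightarrow> real \<Rightarrow> bool" where
  "tendsto_in_prob M Z c \<longleftrightarrow>
     (\<forall>e>0. (\<lambda>n. measure M {\<omega> \<in> space M. e < \<bar>Z n \<omega> - c\<bar>}) \<longlonglongrightarrow> 0)"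

definition prob_simplex :: "(real ^ 'k::finite) set" where
  "prob_simplex = {w. (\<forall>k. 0 \<le> w $ k) \<and> (\<Sum>k\<in>UNIV. w $ k) = 1}"

text \<open>Combined (majority-vote) prediction set, assumption A3.\<close>
definition comb_set :: "(real ^ 'k::finite) \<Rightarrow> ('k \<Rightarrow> real set) \<Rightarrow> real set" where
  "comb_set w C = {y. (\<Sum>k\<in>UNIV. w $ k * (if y \<in> C k then 1 else 0)) > 1/2}"

end

theory Submission
  imports Defs
begin


lemma det_key:
  fixes w :: "real ^ 'k::finite" and Wstar :: "(real ^ 'k) set" and Kstar :: "'k set"
  assumes W_ne: "Wstar \<noteq> {}" and W_closed: "closed Wstar" and W_sub: "Wstar \<subseteq> prob_simplex"
    and delta: "\<delta> > 0"
    and Kw: "(INF w\<in>Wstar. (\<Sum>k\<in>Kstar. w $ k)) \<ge> 1/2 + \<delta>"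
    and ws: "w \<in> prob_simplex"
    and id: "infdist w Wstar \<le> \<delta> / (2 * real CARD('k))"
    and cov: "\<forall>k\<in>Kstar. y \<in> S k"
  shows "y \<in> comb_set w S"
proof -
  obtain w' where w': "w' \<in> Wstar" "infdist w Wstar = dist w w'"
    using infdist_attains_inf[OF W_closed W_ne] by blast
  have bdd: "bdd_below ((\<lambda>w. \<Sum>k\<in>Kstar. w $ k) ` Wstar)"
    using W_sub by (intro bdd_belowI[of _ 0]) (auto simp: prob_simplex_def intro!: sum_nonneg)
  have w'K: "1/2 + \<delta> \<le> (\<Sum>k\<in>Kstar. w' $ k)"
    using Kw cINF_lower[OF bdd w'(1)] by linarith
  have comp: "w' $ k - \<delta> / (2 * real CARD('k)) \<le> w $ k" for k
  proof -
    have "\<bar>(w' - w) $ k\<bar> \<le> norm (w' - w)" by (rule component_le_norm_cart)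
    also have "\<dots> = dist w w'" by (simp add: dist_norm norm_minus_commute)
    finally show ?thesis using w'(2) id by simp
  qed
  have "(\<Sum>k\<in>Kstar. w' $ k) - real (card Kstar) * (\<delta> / (2 * real CARD('k))) \<le> (\<Sum>k\<in>Kstar. w $ k)"
  proof -
    have "(\<Sum>k\<in>Kstar. w' $ k - \<delta> / (2 * real CARD('k))) \<le> (\<Sum>k\<in>Kstar. w $ k)"
      by (intro sum_mono comp)
    then show ?thesis by (simp add: sum_subtractf)
  qed
  moreover have "real (card Kstar) * (\<delta> / (2 * real CARD('k))) \<le> \<delta> / 2"
  proof -
    have c: "real (card Kstar) \<le> real CARD('k)" by (simp add: card_mono)
    have "real (card Kstar) * (\<delta> / (2 * real CARD('k))) \<le> real CARD('k) * (\<delta> / (2 * real CARD('k)))"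
      using delta c by (intro mult_right_mono) auto
    also have "\<dots> = \<delta> / 2" by simp
    finally show ?thesis .
  qed
  ultimately have s: "1/2 < (\<Sum>k\<in>Kstar. w $ k)"
    using w'K delta by linarith
  have nn: "\<And>k. 0 \<le> w $ k" using ws by (simp add: prob_simplex_def)
  have "(\<Sum>k\<in>Kstar. w $ k) = (\<Sum>k\<in>Kstar. w $ k * (if y \<in> S k then 1 else 0))"
    using cov by (intro sum.cong) auto
  also have "\<dots> \<le> (\<Sum>k\<in>UNIV. w $ k * (if y \<in> S k then 1 else 0))"
    using nn by (intro sum_mono2) auto
  finally show ?thesis using s by (simp add: comb_set_def)
qed

theorem theorem3:
  fixes M :: "'a measure"
    and N :: "'d measure"
    and D :: "nat \<Rightarrow> 'a \<Rightarrow> 'd"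
    and X :: "nat \<Rightarrow> 'a \<Rightarrow> 'x"
    and Y :: "nat \<Rightarrow> 'a \<Rightarrow> real"
    and C :: "nat \<Rightarrow> 'k::finite \<Rightarrow> 'd \<Rightarrow> 'x \<Rightarrow> real set"
    and what :: "nat \<Rightarrow> 'a \<Rightarrow> real ^ 'k"
    and Wstar :: "(real ^ 'k) set"
    and Kstar :: "'k set"
    and \<alpha> \<delta> :: real
  assumes M: "prob_space M"
    and K2: "CARD('k) \<ge> 2"
    and alpha: "0 < \<alpha>" "\<alpha> < 1"
    and D_meas: "\<And>n. D n \<in> measurable M N"
    and C_meas: "\<And>n k. {\<omega> \<in> space M. Y n \<omega> \<in> C n k (D n \<omega>) (X n \<omega>)} \<in> sets M"
    and what_meas: "\<And>n. what n \<in> measurable (vimage_algebra (space M) (D n) N) borel"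
    and what_simplex: "\<And>n \<omega>. \<omega> \<in> space M \<Longrightarrow> what n \<omega> \<in> prob_simplex"
    and W_ne: "Wstar \<noteq> {}" and W_closed: "closed Wstar" and W_convex: "convex Wstar"
    and W_sub: "Wstar \<subseteq> prob_simplex"
    and A1': "tendsto_in_prob M
        (\<lambda>n \<omega>. (SUP k\<in>UNIV. \<bar>real_cond_exp M (vimage_algebra (space M) (D n) N)
             (indicator {\<omega>' \<in> space M. Y n \<omega>' \<notin> C n k (D n \<omega>') (X n \<omega>')}) \<omega> - \<alpha>\<bar>)) 0"
    and A2: "tendsto_in_prob M (\<lambda>n \<omega>. infdist (what n \<omega>) Wstar) 0"
    and delta: "\<delta> > 0"
    and Kstar_weight: "(INF w\<in>Wstar. (\<Sum>k\<in>Kstar. w $ k)) \<ge> 1/2 + \<delta>"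
    and Kstar_cov: "limsup (\<lambda>n. ereal (measure M
        {\<omega> \<in> space M. \<exists>k\<in>Kstar. Y n \<omega> \<notin> C n k (D n \<omega>) (X n \<omega>)})) \<le> ereal \<alpha>"
  shows "liminf (\<lambda>n. ereal (measure M
        {\<omega> \<in> space M. Y n \<omega> \<in> comb_set (what n \<omega>) (\<lambda>k. C n k (D n \<omega>) (X n \<omega>))}))
         \<ge> ereal (1 - \<alpha>)"
  proof -
  interpret prob_space M by (rule M)
  define \<eta> where "\<eta> = \<delta> / (2 * real CARD('k))"
  have eta: "\<eta> > 0" using delta by (simp add: \<eta>_def)
  define S where "S n k = {\<omega> \<in> space M. Y n \<omega> \<in> C n k (D n \<omega>) (X n \<omega>)}" for n k
  define A where "A n = {\<omega> \<in> space M. \<exists>k\<in>Kstar. Y n \<omega> \<notin> C n k (D n \<omega>) (X n \<omega>)}" for n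
  define B where "B n = {\<omega> \<in> space M. \<eta> < infdist (what n \<omega>) Wstar}" for n
  define G where "G n = {\<omega> \<in> space M. Y n \<omega> \<in> comb_set (what n \<omega>) (\<lambda>k. C n k (D n \<omega>) (X n \<omega>))}" for n
  have wm: "what n \<in> borel_measurable M" for n
  proof (rule measurable_from_subalg[OF _ what_meas])
    show "subalgebra M (vimage_algebra (space M) (D n) N)"
      unfolding subalgebra_def using sets_image_in_sets[OF refl D_meas] by simp
  qed
  have wk: "(\<lambda>\<omega>. what n \<omega> $ k) \<in> borel_measurable M" for n k
    by (rule borel_measurable_continuous_on[OF _ wm]) (intro continuous_intros)
  have Bm: "B n \<in> sets M" for n
  proof -
    have "(\<lambda>\<omega>. infdist (what n \<omega>) Wstar) \<in> borel_measurable M"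
      by (rule borel_measurable_continuous_on[OF _ wm]) (intro continuous_intros)
    then show ?thesis unfolding B_def by measurable
  qed
  have Am: "A n \<in> sets M" for n
  proof -
    have "A n = (\<Union>k\<in>Kstar. space M - S n k)" unfolding A_def S_def by auto
    also have "\<dots> \<in> sets M" using C_meas unfolding S_def by (intro sets.finite_UN) auto
    finally show ?thesis .
  qed
  have Gm: "G n \<in> sets M" for n
  proof -
    have ind: "(\<lambda>\<omega>. if Y n \<omega> \<in> C n k (D n \<omega>) (X n \<omega>) then 1 else 0::real) \<in> borel_measurable M" for k
      by (rule measurable_If) (auto simp: pred_def C_meas)
    have "(\<lambda>\<omega>. \<Sum>k\<in>UNIV. what n \<omega> $ k * (if Y n \<omega> \<in> C n k (D n \<omega>) (X n \<omega>) then 1 else 0)) \<in> borel_measurable M"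
      using wk ind by (intro borel_measurable_sum borel_measurable_times) auto
    then show ?thesis unfolding G_def comb_set_def by measurable
  qed
  have bound: "1 - prob (A n) - prob (B n) \<le> prob (G n)" for n
  proof -
    have sub: "space M - G n \<subseteq> A n \<union> B n"
    proof
      fix \<omega> assume \<omega>: "\<omega> \<in> space M - G n"
      show "\<omega> \<in> A n \<union> B n"
      proof (rule ccontr)
        assume "\<omega> \<notin> A n \<union> B n"
        then have c: "\<forall>k\<in>Kstar. Y n \<omega> \<in> C n k (D n \<omega>) (X n \<omega>)"
          and i: "infdist (what n \<omega>) Wstar \<le> \<delta> / (2 * real CARD('k))"
          using \<omega> unfolding A_def B_def \<eta>_def by auto
        have "Y n \<omega> \<in> comb_set (what n \<omega>) (\<lambda>k. C n k (D n \<omega>) (X n \<omega>))"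
          by (rule det_key[OF W_ne W_closed W_sub delta Kstar_weight what_simplex i])
             (use \<omega> c in auto)
        then show False using \<omega> unfolding G_def by auto
      qed
    qed
    have "1 - prob (G n) = prob (space M - G n)" using Gm by (simp add: prob_compl)
    also have "\<dots> \<le> prob (A n \<union> B n)" using sub Am Bm by (intro finite_measure_mono) auto
    also have "\<dots> \<le> prob (A n) + prob (B n)" using Am Bm by (rule measure_Un_le)
    finally show ?thesis by linarith
  qed
  have Blim: "(\<lambda>n. prob (B n)) \<longlonglongrightarrow> 0"
  proof -
    have "(\<lambda>n. measure M {\<omega> \<in> space M. \<eta> < \<bar>infdist (what n \<omega>) Wstar - 0\<bar>}) \<longlonglongrightarrow> 0"
      using A2 eta unfolding tendsto_in_prob_def by blast
    moreover have "{\<omega> \<in> space M. \<eta> < \<bar>infdist (what n \<omega>) Wstar - 0\<bar>} = B n" for n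
      unfolding B_def by (auto simp: infdist_nonneg)
    ultimately show ?thesis by simp
  qed
  show ?thesis
    unfolding le_Liminf_iff
  proof (intro allI impI)
    fix y assume "y < ereal (1 - \<alpha>)"
    then obtain r where r: "y < ereal r" "r < 1 - \<alpha>" using ereal_dense2 by fastforce
    define e where "e = 1 - \<alpha> - r"
    have e: "e > 0" using r by (simp add: e_def)
    have "eventually (\<lambda>n. ereal (prob (A n)) < ereal (\<alpha> + e/2)) sequentially"
    proof -
      have "ereal \<alpha> < ereal (\<alpha> + e/2)" using e by simp
      then show ?thesis using Kstar_cov unfolding Limsup_le_iff A_def by blast
    qed
    then have ev1: "eventually (\<lambda>n. prob (A n) < \<alpha> + e/2) sequentially" by simp
    have ev2: "eventually (\<lambda>n. prob (B n) < e/2) sequentially"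
      using Blim e by (intro order_tendstoD) auto
    show "eventually (\<lambda>n. y < ereal (prob {\<omega> \<in> space M. Y n \<omega> \<in> comb_set (what n \<omega>) (\<lambda>k. C n k (D n \<omega>) (X n \<omega>))})) sequentially"
      using ev1 ev2
    proof eventually_elim
      case (elim n)
      have "r < prob (G n)" using bound[of n] elim by (simp add: e_def field_simps)
      then have "ereal r < ereal (prob (G n))" by simp
      with r(1) show ?case unfolding G_def by (rule less_trans)
    qed
  qed
qed

end
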